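(* Let $0<\lambda<\frac{5-\sqrt{21}}{2}$ and let $K$ be the attractor of the IFS $f_1(x)=\lambda x$, $f_2(x)=\lambda x+2\lambda$, $f_3(x)=\lambda x+3\lambda-\lambda^2$, $f_4(x)=\lambda x+1-\lambda$. If $x\in K$ has infinitely many codings, then $x$ has uncountably many codings; in particular $U_{\aleph_0}=\emptyset$.
   Context: A coding of $x\in K$ is a sequence $(i_n)\in\{1,2,3,4\}^{\mathbb{N}}$ with $x=\lim_{n\to\infty}f_{i_1}\circ\cdots\circ f_{i_n}(0)$. $U_{\aleph_0}$ denotes the set of $x\in K$ having exactly countably infinitely many codings. *)

theory Defs
  imports Complex_Main "HOL-Library.Countable_Set"
begin

text \<open>The IFS maps f_1,...,f_4 (indices 1..4; other indices are irrelevant).\<close>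
definition ifs :: "real \<Rightarrow> nat \<Rightarrow> real \<Rightarrow> real" where
  "ifs lam i x =
     (if i = 1 then lam * x
      else if i = 2 then lam * x + 2 * lam
      else if i = 3 then lam * x + 3 * lam - lam\<^sup>2
      else lam * x + 1 - lam)"

definition partial_comp :: "real \<Rightarrow> (nat \<Rightarrow> nat) \<Rightarrow> nat \<Rightarrow> real" where
  "partial_comp lam c n = foldr (\<lambda>k. ifs lam (c k)) [0..<n] 0"

definition codings :: "real \<Rightarrow> real \<Rightarrow> (nat \<Rightarrow> nat) set" where
  "codings lam x = {c. (\<forall>n. c n \<in> {1,2,3,4}) \<and> (partial_comp lam c \<longlonglongrightarrow> x)}"

definition is_attractor :: "real \<Rightarrow> real set \<Rightarrow> bool" where
  "is_attractor lam K \<longleftrightarrow> compact K \<and> K \<noteq> {} \<and> K = (\<Union>i\<in>{1,2,3,4}. ifs lam i ` K)"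

definition U_aleph0 :: "real \<Rightarrow> real set \<Rightarrow> real set" where
  "U_aleph0 lam K = {x \<in> K. infinite (codings lam x) \<and> countable (codings lam x)}"

end

theory Submission
  imports Defs
begin

definition dd :: "real \<Rightarrow> nat \<Rightarrow> real" where "dd lam i = ifs lam i 0"

lemma ifs_dd: "ifs lam i x = lam * x + dd lam i"
  by (simp add: dd_def ifs_def)

lemma dd_vals: "dd lam 1 = 0" "dd lam (Suc 0) = 0" "dd lam 2 = 2*lam" "dd lam 3 = 3*lam - lam^2" "dd lam 4 = 1 - lam"
  by (simp_all add: dd_def ifs_def)

lemma ifs_dd': "ifs lam i = (\<lambda>x. lam * x + dd lam i)"
  by (rule ext) (simp add: ifs_dd)

lemma foldr_sum: "foldr (\<lambda>k. ifs lam (c k)) [0..<n] y = (\<Sum>k<n. lam^k * dd lam (c k)) + lam^n * y"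
proof (induction n arbitrary: y)
  case 0 then show ?case by simp
next
  case (Suc n)
  have "foldr (\<lambda>k. ifs lam (c k)) [0..<Suc n] y = foldr (\<lambda>k. ifs lam (c k)) [0..<n] (ifs lam (c n) y)" by simp
  also have "\<dots> = (\<Sum>k<n. lam^k * dd lam (c k)) + lam^n * (lam*y + dd lam (c n))" using Suc by (simp add: ifs_dd')
  also have "\<dots> = (\<Sum>k<Suc n. lam^k * dd lam (c k)) + lam^Suc n * y" by (simp add: algebra_simps)
  finally show ?case .
qed

lemma partial_comp_sum: "partial_comp lam c n = (\<Sum>k<n. lam^k * dd lam (c k))"
  using foldr_sum[of lam c n 0] by (simp add: partial_comp_def)

lemma codings_sums: "c \<in> codings lam x \<longleftrightarrow> (\<forall>n. c n \<in> {1,2,3,4}) \<and> (\<lambda>k. lam^k * dd lam (c k)) sums x"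
proof -
  have "partial_comp lam c = (\<lambda>n. \<Sum>k<n. lam^k * dd lam (c k))" by (rule ext) (rule partial_comp_sum)
  then show ?thesis by (simp add: codings_def sums_def)
qed

lemma dd_bounds:
  assumes "0 < lam" "lam < 1/4" "1 - 5*lam + lam^2 > 0" "i \<in> {1,2,3,4::nat}"
  shows "0 \<le> dd lam i" "dd lam i \<le> 1 - lam"
proof -
  have "lam^2 < lam" using assms by (simp add: power2_eq_square)
  then show "0 \<le> dd lam i" "dd lam i \<le> 1 - lam" using assms by (auto simp: dd_vals)
qed

definition Y :: "real \<Rightarrow> (nat \<Rightarrow> nat) \<Rightarrow> nat \<Rightarrow> real" where
  "Y lam c n = suminf (\<lambda>k. lam^k * dd lam (c (n+k)))"

lemma Y_summable:
  assumes H: "0 < lam" "lam < 1/4" "1 - 5*lam + lam^2 > 0" and v: "\<forall>n. c n \<in> {1,2,3,4}"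
  shows "summable (\<lambda>k. lam^k * dd lam (c (n+k)))"
proof (rule summable_comparison_test)
  show "summable (\<lambda>k. lam^k)" using H by (intro summable_geometric) simp
  show "\<exists>N. \<forall>k\<ge>N. norm (lam^k * dd lam (c (n+k))) \<le> lam^k"
  proof (intro exI allI impI)
    fix k :: nat
    have "0 \<le> dd lam (c (n+k))" "dd lam (c (n+k)) \<le> 1 - lam" using dd_bounds[OF H] v by auto
    then show "norm (lam^k * dd lam (c (n+k))) \<le> lam^k" using H
      by (simp add: abs_mult mult_left_le)
  qed
qed

lemma Y_bounds:
  assumes H: "0 < lam" "lam < 1/4" "1 - 5*lam + lam^2 > 0" and v: "\<forall>n. c n \<in> {1,2,3,4}"
  shows "0 \<le> Y lam c n" "Y lam c n \<le> 1"
proof -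
  have s: "summable (\<lambda>k. lam^k * dd lam (c (n+k)))" by (rule Y_summable[OF H v])
  have b: "0 \<le> dd lam (c (n+k))" "dd lam (c (n+k)) \<le> 1 - lam" for k using dd_bounds[OF H] v by auto
  show "0 \<le> Y lam c n" unfolding Y_def using s b H by (intro suminf_nonneg) auto
  have g: "summable (\<lambda>k. (1-lam) * lam^k)" using H by (intro summable_mult summable_geometric) simp
  have "Y lam c n \<le> (\<Sum>k. (1-lam) * lam^k)" unfolding Y_def
    using s g b H by (intro suminf_le) (auto simp: mult.commute[of "lam^_"] intro: mult_right_mono)
  also have "\<dots> = (1-lam) * (1/(1-lam))" using H by (simp add: suminf_mult suminf_geometric)
  also have "\<dots> = 1" using H by simp
  finally show "Y lam c n \<le> 1" .
qed

lemma Y_rec: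
  assumes H: "0 < lam" "lam < 1/4" "1 - 5*lam + lam^2 > 0" and v: "\<forall>n. c n \<in> {1,2,3,4}"
  shows "Y lam c n = dd lam (c n) + lam * Y lam c (Suc n)"
proof -
  have s: "summable (\<lambda>k. lam^k * dd lam (c (n+k)))" by (rule Y_summable[OF H v])
  have s2: "summable (\<lambda>k. lam^k * dd lam (c (Suc n+k)))" by (rule Y_summable[OF H v])
  have "(\<Sum>k. lam^Suc k * dd lam (c (n + Suc k))) = Y lam c n - dd lam (c n)"
    using suminf_split_head[OF s] by (simp add: Y_def)
  moreover have "(\<Sum>k. lam^Suc k * dd lam (c (n + Suc k))) = lam * Y lam c (Suc n)"
    unfolding Y_def using suminf_mult[OF s2, of lam] by (simp add: mult.assoc)
  ultimately show ?thesis by simp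
qed

definition dv :: "real \<Rightarrow> real \<Rightarrow> nat \<Rightarrow> real" where
  "dv l L a = (if a = 1 then 0 else if a = 2 then 2*l else if a = 3 then 3*l - L else 1 - l)"

lemma dd_dv: "a \<in> {1,2,3,4} \<Longrightarrow> dd lam a = dv lam (lam^2) a"
  by (auto simp: dd_vals dv_def)

lemma arith_core:
  fixes l L U V :: real
  assumes "0 < l" "l < 1/4" "0 < 1 - 5*l + L" "L < l" "0 \<le> U" "U \<le> l" "0 \<le> V" "V \<le> l"
    "a \<in> {1,2,3,4::nat}" "b \<in> {1,2,3,4::nat}" "dv l L a + U = dv l L b + V"
  shows "(a = b \<and> U = V) \<or> (a = 2 \<and> b = 3 \<and> U = l - L + V) \<or> (a = 3 \<and> b = 2 \<and> V = l - L + U)"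
  using assms by (auto simp: dv_def)

lemma arith_core2:
  fixes l L U u :: real
  assumes "0 < l" "l < 1/4" "0 < 1 - 5*l + L" "L < l" "0 \<le> U" "U \<le> l"
    "p \<in> {1,2,3,4::nat}" "u = dv l L p + U"
  shows "u \<ge> 1 - l \<Longrightarrow> p = 4" and "u \<le> l \<Longrightarrow> p = 1"
  using assms by (auto simp: dv_def)

lemma step_arith:
  assumes H: "0 < lam" "lam < 1/4" "1 - 5*lam + lam^2 > 0"
   and a: "a \<in> {1,2,3,4::nat}" and b: "b \<in> {1,2,3,4::nat}"
   and u: "0 \<le> u" "u \<le> 1" and v: "0 \<le> v" "v \<le> 1"
   and eq: "dd lam a + lam*u = dd lam b + lam*v"
  shows "(a = b \<and> u = v) \<or> (a = 2 \<and> b = 3 \<and> u = 1 - lam + v) \<or> (a = 3 \<and> b = 2 \<and> v = 1 - lam + u)"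
proof -
  have l2: "lam^2 < lam" using H by (simp add: power2_eq_square)
  have lu: "lam*u \<le> lam" "0 \<le> lam*u" "lam*v \<le> lam" "0 \<le> lam*v"
    using H u v by (auto simp: mult_left_le)
  have c: "x = y" if "lam*x = lam*y" for x y using that H by simp
  have eq': "dv lam (lam^2) a + lam*u = dv lam (lam^2) b + lam*v" using eq dd_dv a b by simp
  have "lam - lam^2 + lam*v = lam*(1 - lam + v)" "lam - lam^2 + lam*u = lam*(1 - lam + u)"
    by (simp_all add: algebra_simps power2_eq_square)
  with arith_core[OF H(1,2) H(3) l2 lu(2,1,4,3) a b eq'] c[of u v] c[of u "1 - lam + v"] c[of v "1 - lam + u"]
  show ?thesis by auto
qed

lemma next_digit:
  assumes H: "0 < lam" "lam < 1/4" "1 - 5*lam + lam^2 > 0"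
    and p: "p \<in> {1,2,3,4::nat}" and w: "0 \<le> w" "w \<le> 1" and u: "u = dd lam p + lam*w"
  shows "u \<ge> 1 - lam \<Longrightarrow> p = 4" and "u \<le> lam \<Longrightarrow> p = 1"
proof -
  have l2: "lam^2 < lam" using H by (simp add: power2_eq_square)
  have lw: "lam*w \<le> lam" "0 \<le> lam*w" using H w by (auto simp: mult_left_le)
  have u': "u = dv lam (lam^2) p + lam*w" using u dd_dv p by simp
  show "u \<ge> 1 - lam \<Longrightarrow> p = 4" "u \<le> lam \<Longrightarrow> p = 1"
    using arith_core2[OF H(1,2) H(3) l2 lw(2,1) p u'] by auto
qed

lemma local_step:
  assumes H: "0 < lam" "lam < 1/4" "1 - 5*lam + lam^2 > 0"
    and v: "\<forall>n. c n \<in> {1,2,3,4}" and v': "\<forall>n. c' n \<in> {1,2,3,4}"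
    and g: "Y lam c n = Y lam c' n"
  shows "(c n = c' n \<and> Y lam c (Suc n) = Y lam c' (Suc n)) \<or>
         (((c n = 2 \<and> c (Suc n) = 4 \<and> c' n = 3 \<and> c' (Suc n) = 1) \<or>
           (c n = 3 \<and> c (Suc n) = 1 \<and> c' n = 2 \<and> c' (Suc n) = 4)) \<and>
          Y lam c (Suc (Suc n)) = Y lam c' (Suc (Suc n)))"
proof -
  note bd = Y_bounds[OF H v] Y_bounds[OF H v']
  note r = Y_rec[OF H v] Y_rec[OF H v']
  have eq: "dd lam (c n) + lam * Y lam c (Suc n) = dd lam (c' n) + lam * Y lam c' (Suc n)"
    using g r by metis
  have c: "x = y" if "lam*x = lam*y" for x y using that H by simp
  from step_arith[OF H _ _ bd(1,2) bd(3,4) eq] v v'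
  consider "c n = c' n" "Y lam c (Suc n) = Y lam c' (Suc n)"
    | "c n = 2" "c' n = 3" "Y lam c (Suc n) = 1 - lam + Y lam c' (Suc n)"
    | "c n = 3" "c' n = 2" "Y lam c' (Suc n) = 1 - lam + Y lam c (Suc n)"
    by blast
  then show ?thesis
  proof cases
    case 1 then show ?thesis by simp
  next
    case 2
    have a: "Y lam c (Suc n) = dd lam (c (Suc n)) + lam * Y lam c (Suc (Suc n))" using r by metis
    have b: "Y lam c' (Suc n) = dd lam (c' (Suc n)) + lam * Y lam c' (Suc (Suc n))" using r by metis
    have "c (Suc n) = 4" using next_digit(1)[OF H _ bd(1,2) a] v 2 bd by auto
    moreover have "Y lam c' (Suc n) \<le> lam" using 2 bd(2)[of "Suc n"] by linarith
    then have "c' (Suc n) = 1" using next_digit(2)[OF H _ bd(3,4) b] v' by auto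
    ultimately have "lam * Y lam c (Suc (Suc n)) = lam * Y lam c' (Suc (Suc n))"
      using a b 2 by (auto simp: dd_vals)
    then have "Y lam c (Suc (Suc n)) = Y lam c' (Suc (Suc n))" by (rule c)
    with 2 \<open>c (Suc n) = 4\<close> \<open>c' (Suc n) = 1\<close> show ?thesis by simp
  next
    case 3
    have a: "Y lam c (Suc n) = dd lam (c (Suc n)) + lam * Y lam c (Suc (Suc n))" using r by metis
    have b: "Y lam c' (Suc n) = dd lam (c' (Suc n)) + lam * Y lam c' (Suc (Suc n))" using r by metis
    have "c' (Suc n) = 4" using next_digit(1)[OF H _ bd(3,4) b] v' 3 bd by auto
    moreover have "Y lam c (Suc n) \<le> lam" using 3 bd(4)[of "Suc n"] by linarith
    then have "c (Suc n) = 1" using next_digit(2)[OF H _ bd(1,2) a] v by auto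
    ultimately have "lam * Y lam c (Suc (Suc n)) = lam * Y lam c' (Suc (Suc n))"
      using a b 3 by (auto simp: dd_vals)
    then have "Y lam c (Suc (Suc n)) = Y lam c' (Suc (Suc n))" by (rule c)
    with 3 \<open>c' (Suc n) = 4\<close> \<open>c (Suc n) = 1\<close> show ?thesis by simp
  qed
qed

definition BB :: "(nat \<Rightarrow> nat) \<Rightarrow> nat set" where
  "BB c = {n. (c n = 2 \<and> c (Suc n) = 4) \<or> (c n = 3 \<and> c (Suc n) = 1)}"

lemma BB_adj: "n \<in> BB c \<Longrightarrow> Suc n \<notin> BB c"
  by (auto simp: BB_def)

definition swp :: "(nat \<Rightarrow> nat) \<Rightarrow> nat set \<Rightarrow> nat \<Rightarrow> nat" where
  "swp c T k = (if k \<in> T then (if c k = 2 then 3 else 2)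
                else if 0 < k \<and> k - 1 \<in> T then (if c k = 4 then 1 else 4) else c k)"

lemma Y0: "c \<in> codings lam x \<Longrightarrow> Y lam c 0 = x"
  by (simp add: codings_sums Y_def sums_unique[symmetric])

lemma codings_sub:
  assumes H: "0 < lam" "lam < 1/4" "1 - 5*lam + lam^2 > 0"
    and cc: "c \<in> codings lam x" and cc': "c' \<in> codings lam x"
  shows "c' = swp c {m \<in> BB c. c' m \<noteq> c m}"
proof -
  define T where "T = {m \<in> BB c. c' m \<noteq> c m}"
  have v: "\<forall>n. c n \<in> {1,2,3,4}" and v': "\<forall>n. c' n \<in> {1,2,3,4}" using cc cc' by (auto simp: codings_sums)
  define good where "good n \<longleftrightarrow> Y lam c n = Y lam c' n" for n
  note ls = local_step[OF H v v', folded good_def]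
  have R: "good n \<or> (\<exists>m. n = Suc m \<and> m \<in> BB c \<and> c' m \<noteq> c m \<and> good (Suc n))" for n
  proof (induction n)
    case 0 then show ?case using Y0[OF cc] Y0[OF cc'] by (simp add: good_def)
  next
    case (Suc n)
    then show ?case
    proof
      assume "good n"
      from ls[OF this] show ?thesis by (auto simp: BB_def)
    qed auto
  qed
  have "c' n = swp c T n" for n
  proof (cases "n \<in> T")
    case True
    then have nB: "n \<in> BB c" "c' n \<noteq> c n" by (auto simp: T_def)
    have "good n" using R[of n] nB BB_adj by auto
    from ls[OF this] nB show ?thesis using True by (auto simp: swp_def)
  next
    case False
    show ?thesis
    proof (cases "0 < n \<and> n - 1 \<in> T")
      case True
      then obtain m where m: "n = Suc m" "m \<in> BB c" "c' m \<noteq> c m" by (cases n) (auto simp: T_def)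
      have "good m" using R[of m] m BB_adj by auto
      from ls[OF this] m show ?thesis using False True by (auto simp: swp_def)
    next
      case F2: False
      have "c' n = c n"
      proof (cases "good n")
        case True
        from ls[OF this] False show ?thesis by (auto simp: T_def BB_def)
      next
        case False
        then obtain m where "n = Suc m" "m \<in> BB c" "c' m \<noteq> c m" using R[of n] by auto
        with F2 show ?thesis by (auto simp: T_def)
      qed
      then show ?thesis using False F2 by (simp add: swp_def)
    qed
  qed
  then have "c' = swp c T" by (rule ext)
  then show ?thesis by (simp only: T_def)
qed

lemma swp_coding:
  assumes H: "0 < lam" "lam < 1/4" "1 - 5*lam + lam^2 > 0"
    and cc: "c \<in> codings lam x" and T: "T \<subseteq> BB c"
  shows "swp c T \<in> codings lam x"
proof -
  have v: "\<forall>n. c n \<in> {1,2,3,4}" and sx: "(\<lambda>k. lam^k * dd lam (c k)) sums x"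
    using cc by (auto simp: codings_sums)
  have v2: "\<forall>n. swp c T n \<in> {1,2,3,4}" using v by (auto simp: swp_def)
  define g where "g k = (if k \<in> T then (if c k = 2 then 1 else -1) * (lam - lam^2) * lam^k else 0)" for k
  define G where "G m = (case m of 0 \<Rightarrow> 0 | Suc j \<Rightarrow> g j)" for m
  have key: "lam^k * dd lam (swp c T k) = lam^k * dd lam (c k) + (G (Suc k) - G k)" for k
  proof (cases "k \<in> T")
    case True
    then have kB: "k \<in> BB c" using T by auto
    have "G k = 0"
    proof (cases k)
      case (Suc j)
      have "j \<notin> T" using kB BB_adj[of j c] T Suc by auto
      then show ?thesis by (simp add: G_def g_def Suc)
    qed (simp add: G_def)
    then show ?thesis using True kB
      by (auto simp: G_def g_def swp_def BB_def dd_vals algebra_simps power2_eq_square)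
  next
    case False
    show ?thesis
    proof (cases "0 < k \<and> k - 1 \<in> T")
      case True
      then obtain j where j: "k = Suc j" "j \<in> T" by (cases k) auto
      then have "j \<in> BB c" using T by auto
      then show ?thesis using False j
        by (auto simp: G_def g_def swp_def BB_def dd_vals algebra_simps power2_eq_square)
    next
      case F2: False
      have "G k = 0"
      proof (cases k)
        case (Suc j)
        then show ?thesis using F2 by (simp add: G_def g_def)
      qed (simp add: G_def)
      moreover have "swp c T k = c k" using False F2 by (simp add: swp_def)
      ultimately show ?thesis using False by (simp add: G_def g_def)
    qed
  qed
  have g0: "g \<longlonglongrightarrow> 0"
  proof (rule tendsto_0_le[where K=1])
    show "(\<lambda>k. lam^k) \<longlonglongrightarrow> 0" using H by (intro LIMSEQ_power_zero) simp
    have "lam - lam^2 \<le> 1" "0 \<le> lam - lam^2" using H by (auto simp: power2_eq_square)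
    then show "\<forall>\<^sub>F k in sequentially. norm (g k) \<le> norm (lam^k) * 1"
      using H by (auto simp: g_def abs_mult intro!: always_eventually mult_left_le_one_le)
  qed
  have "G \<longlonglongrightarrow> 0"
    by (rule LIMSEQ_imp_Suc) (use g0 in \<open>simp add: G_def\<close>)
  from telescope_sums[OF this] have "(\<lambda>n. G (Suc n) - G n) sums 0" by (simp add: G_def)
  from sums_add[OF sx this] have "(\<lambda>k. lam^k * dd lam (swp c T k)) sums x"
    by (simp add: key)
  with v2 show ?thesis by (simp add: codings_sums)
qed

lemma swp_inj: "inj_on (swp c) (Pow (BB c))"
proof (rule inj_onI)
  fix T T' assume T: "T \<in> Pow (BB c)" and T': "T' \<in> Pow (BB c)" and e: "swp c T = swp c T'"
  have *: "n \<in> S'" if S: "S \<subseteq> BB c" and S': "S' \<subseteq> BB c" and e: "swp c S = swp c S'" and n: "n \<in> S" for S S' n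
  proof (rule ccontr)
    assume nn: "n \<notin> S'"
    have nB: "n \<in> BB c" using S n by auto
    have "\<not> (0 < n \<and> n - 1 \<in> S')"
    proof
      assume "0 < n \<and> n - 1 \<in> S'"
      then obtain j where "n = Suc j" "j \<in> BB c" using S' by (cases n) auto
      with nB BB_adj show False by auto
    qed
    then have "swp c S' n = c n" using nn by (simp add: swp_def)
    moreover have "swp c S n \<noteq> c n" using n nB by (auto simp: swp_def BB_def)
    ultimately show False using e by simp
  qed
  show "T = T'" using *[of T T'] *[of T' T] T T' e by auto
qed

lemma uncountable_Pow:
  assumes "infinite B" shows "uncountable (Pow B)"
proof
  assume "countable (Pow B)"
  then obtain g :: "'a set \<Rightarrow> nat" where g: "inj_on g (Pow B)" by (auto simp: countable_def)
  obtain f :: "nat \<Rightarrow> 'a" where f: "inj f" "range f \<subseteq> B" using infinite_countable_subset[OF assms] by blast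
  define h where "h = f \<circ> g"
  have hi: "inj_on h (Pow B)" unfolding h_def using g f(1) by (simp add: comp_inj_on inj_on_subset)
  have hB: "h S \<in> B" for S using f(2) by (auto simp: h_def)
  define F where "F y = (if y \<in> h ` Pow B then inv_into (Pow B) h y else {})" for y
  have "F ` B = Pow B"
  proof
    show "F ` B \<subseteq> Pow B"
    proof
      fix S assume "S \<in> F ` B"
      then obtain y where y: "S = F y" by auto
      show "S \<in> Pow B"
      proof (cases "y \<in> h ` Pow B")
        case True
        then have "inv_into (Pow B) h y \<in> Pow B" by (rule inv_into_into)
        then show ?thesis using True y by (simp add: F_def)
      qed (simp add: F_def y)
    qed
    show "Pow B \<subseteq> F ` B"
    proof
      fix S assume S: "S \<in> Pow B"
      have "F (h S) = S" using S hi by (auto simp: F_def)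
      then show "S \<in> F ` B" using hB by (metis image_eqI)
    qed
  qed
  then show False using Cantors_theorem by blast
qed

theorem lemma2p32:
  fixes lam :: real and K :: "real set"
  assumes "0 < lam" and "lam < (5 - sqrt 21) / 2"
    and "is_attractor lam K"
  shows "(\<forall>x\<in>K. infinite (codings lam x) \<longrightarrow> uncountable (codings lam x))
         \<and> U_aleph0 lam K = {}"
proof -
  have gen: "((5 - s)/2 - lam)*((5+s)/2 - lam) = (25 - s*s)/4 - 5*lam + lam*lam" for s :: real
    by (simp add: field_simps)
  have "(9/2::real) < sqrt 21" by (rule real_less_rsqrt) (simp add: power2_eq_square)
  then have h2: "lam < 1/4" using assms(2) by simp
  have sp: "0 \<le> sqrt 21" by simp
  have "0 < ((5 - sqrt 21)/2 - lam) * ((5 + sqrt 21)/2 - lam)"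
  proof (intro mult_pos_pos)
    have "(5 - sqrt 21)/2 \<le> (5 + sqrt 21)/2" using sp by simp
    then show "0 < (5 + sqrt 21)/2 - lam" using assms(2) by linarith
  qed (use assms(2) in linarith)
  also have "\<dots> = (25 - sqrt 21 * sqrt 21)/4 - 5*lam + lam*lam"
    by (rule gen)
  also have "\<dots> = 1 - 5*lam + lam^2" by (simp add: power2_eq_square)
  finally have h3: "1 - 5*lam + lam^2 > 0" .
  note H = assms(1) h2 h3
  have main: "uncountable (codings lam x)" if inf: "infinite (codings lam x)" for x
  proof -
    obtain c where cc: "c \<in> codings lam x" using inf by (metis ex_in_conv finite.emptyI)
    have eq: "codings lam x = swp c ` Pow (BB c)"
    proof
      show "codings lam x \<subseteq> swp c ` Pow (BB c)"
      proof
        fix c' assume "c' \<in> codings lam x"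
        from codings_sub[OF H cc this] show "c' \<in> swp c ` Pow (BB c)" by blast
      qed
      show "swp c ` Pow (BB c) \<subseteq> codings lam x" using swp_coding[OF H cc] by auto
    qed
    have "infinite (BB c)"
    proof
      assume "finite (BB c)"
      then have "finite (codings lam x)" unfolding eq by simp
      with inf show False by simp
    qed
    then have "uncountable (Pow (BB c))" by (rule uncountable_Pow)
    then show ?thesis unfolding eq using countable_image_inj_on swp_inj by blast
  qed
  show ?thesis using main by (auto simp: U_aleph0_def)
qed

end
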